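(* Let $\alpha\in(0,1)$, $T>0$, and $f:[0,T]\times\mathbb{C}^d\to\mathbb{C}^d$ continuous and locally Lipschitz in the second variable: for every $R>0$ there is $M>0$ with $|f(t,x)-f(t,y)|\le M|x-y|$ whenever $|t|\le R$, $|x|\le R$, $|y|\le R$. If $x_1,x_2:[0,T]\to\mathbb{C}^d$ are absolutely continuous, $x_1(0)=x_2(0)=x_0$, and ${}^LD^\alpha x_i(t)=f(t,x_i(t))$ for almost every $t\in[0,T]$ ($i=1,2$), then $x_1=x_2$ on $[0,T]$.
   Context: Absolutely continuous: differentiable a.e., $x'\in L^1[0,T]$, $x(t)=x(0)+\int_0^tx'$. Caputo derivative ${}^CD^\alpha x(t)=\frac{1}{\Gamma(1-\alpha)}\int_0^t (t-\tau)^{-\alpha}x'(\tau)d\tau$; L-fractional derivative ${}^LD^\alpha x(t)=\frac{\Gamma(2-\alpha)}{t^{1-\alpha}}{}^CD^\alpha x(t)$, $t\in(0,T]$. *)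

theory Defs
  imports "HOL-Analysis.Analysis"
begin

definition dx :: "real \<Rightarrow> (real \<Rightarrow> 'a::real_normed_vector) \<Rightarrow> real \<Rightarrow> 'a" where
  "dx T x t = vector_derivative x (at t within {0..T})"

definition abs_cont_on :: "real \<Rightarrow> (real \<Rightarrow> 'a::euclidean_space) \<Rightarrow> bool" where
  "abs_cont_on T x \<longleftrightarrow>
     (AE t in lebesgue. t \<in> {0..T} \<longrightarrow> x differentiable (at t within {0..T})) \<and>
     dx T x absolutely_integrable_on {0..T} \<and>
     (\<forall>t\<in>{0..T}. x t = x 0 + integral {0..t} (dx T x))"

definition caputo :: "real \<Rightarrow> real \<Rightarrow> (real \<Rightarrow> 'a::euclidean_space) \<Rightarrow> real \<Rightarrow> 'a" where
  "caputo T \<alpha> x t = (1 / Gamma (1 - \<alpha>)) *\<^sub>R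
      integral {0..t} (\<lambda>\<tau>. ((t - \<tau>) powr (-\<alpha>)) *\<^sub>R dx T x \<tau>)"

definition Lfrac :: "real \<Rightarrow> real \<Rightarrow> (real \<Rightarrow> 'a::euclidean_space) \<Rightarrow> real \<Rightarrow> 'a" where
  "Lfrac T \<alpha> x t = (Gamma (2 - \<alpha>) / t powr (1 - \<alpha>)) *\<^sub>R caputo T \<alpha> x t"

end

theory Submission imports Defs begin




definition qf :: "real \<Rightarrow> real \<Rightarrow> real" where
  "qf a u = u powr (-a) * (1-u) powr (a-1)"

lemma qf_meas: "qf a \<in> borel_measurable (lebesgue_on S)"
  unfolding qf_def by (intro measurable_restrict_space1 measurable_completion) measurable

lemma powr_rev_integrable:
  assumes "b > -1"
  shows "(\<lambda>u::real. (1-u) powr b) integrable_on {0..1}"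
proof -
  have "(\<lambda>x::real. x powr b) integrable_on cbox 0 1"
    using integrable_on_powr_from_0[OF assms, of 1] by simp
  from integrable_affinity[OF this, of "-1" 1]
  have "(\<lambda>x. ((-1) *\<^sub>R x + 1) powr b) integrable_on (\<lambda>x. (1 / -1) *\<^sub>R x + - ((1 / -1) *\<^sub>R 1)) ` cbox (0::real) 1"
    by simp
  moreover have "(\<lambda>x::real. (1 / -1) *\<^sub>R x + - ((1 / -1) *\<^sub>R 1)) ` cbox (0::real) 1 = {0..1}"
    by (auto simp: image_iff intro!: bexI[where x="1 - _"])
  ultimately show ?thesis by simp
qed

lemma qf_integrable:
  assumes "0 < a" "a < 1"
  shows "qf a integrable_on {0..1}"
proof (rule measurable_bounded_by_integrable_imp_integrable[OF qf_meas])
  show "(\<lambda>u. 2 * (u powr (-a) + (1-u) powr (a-1))) integrable_on {0..1}"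
  proof -
    have "(\<lambda>u::real. u powr (-a)) integrable_on {0..1}"
      using integrable_on_powr_from_0[of "-a" 1] assms by auto
    moreover have "(\<lambda>u::real. (1-u) powr (a-1)) integrable_on {0..1}"
      using powr_rev_integrable[of "a-1"] assms by auto
    ultimately show ?thesis by (intro integrable_on_mult_right integrable_add)
  qed
  show "{0..1::real} \<in> sets lebesgue" by simp
  fix u :: real assume u: "u \<in> {0..1}"
  show "norm (qf a u) \<le> 2 * (u powr (-a) + (1-u) powr (a-1))"
  proof (cases "u = 0 \<or> u = 1")
    case True then show ?thesis by (auto simp: qf_def)
  next
    case False
    then have u0: "0 < u" "u < 1" using u by auto
    have p1: "u powr (-a) > 0" "(1-u) powr (a-1) > 0" using u0 by auto
    have nq: "norm (qf a u) = qf a u" using p1 by (simp add: qf_def)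
    show ?thesis
    proof (cases "u \<le> 1/2")
      case True
      have "(1-u) powr (a-1) \<le> (1/2) powr (a-1)"
        by (rule powr_mono2') (use assms True in auto)
      also have "(1/2::real) powr (a-1) = 2 powr (1-a)"
        by (simp add: powr_divide powr_minus_divide[symmetric] powr_minus)
      also have "\<dots> \<le> 2 powr 1" by (rule powr_mono) (use assms in auto)
      finally have "(1-u) powr (a-1) \<le> 2" by simp
      then have "qf a u \<le> u powr (-a) * 2" unfolding qf_def
        using p1 by (intro mult_left_mono) auto
      then have "qf a u \<le> 2 * u powr (-a) + 2*(1-u) powr (a-1)" using p1 by linarith
      then show ?thesis using nq by (simp add: distrib_left)
    next
      case False
      have "u powr (-a) \<le> (1/2) powr (-a)"
        by (rule powr_mono2') (use assms False in auto)
      also have "(1/2::real) powr (-a) = 2 powr a"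
        by (simp add: powr_divide powr_minus_divide[symmetric] powr_minus)
      also have "\<dots> \<le> 2 powr 1" by (rule powr_mono) (use assms in auto)
      finally have "u powr (-a) \<le> 2" by simp
      then have "qf a u \<le> 2 * (1-u) powr (a-1)" unfolding qf_def
        using p1 by (intro mult_right_mono) auto
      then have "qf a u \<le> 2 * u powr (-a) + 2*(1-u) powr (a-1)" using p1 by linarith
      then show ?thesis using nq by (simp add: distrib_left)
    qed
  qed
qed

definition Bc :: "real \<Rightarrow> real" where "Bc a = integral {0..1} (qf a)"

lemma Bc_pos:
  assumes "0 < a" "a < 1"
  shows "Bc a > 0"
proof -
  have c1: "((\<lambda>u::real. 1::real) has_integral 1) {0..1}" using has_integral_const_real[of "1::real" 0 1] by simp
  have w: "((\<lambda>u::real. if u \<in> {0,1} then 0 else 1::real) has_integral 1) {0..1::real}"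
    by (rule has_integral_spike_finite[OF _ _ c1, of "{0,1}"]) auto
  have "integral {0..1::real} (\<lambda>u::real. if u \<in> {0,1} then 0 else 1) \<le> integral {0..1} (qf a)"
  proof (rule integral_le)
    show "(\<lambda>u::real. if u \<in> {0,1} then 0 else 1::real) integrable_on {0..1}" using w by (rule has_integral_integrable)
    show "qf a integrable_on {0..1}" using qf_integrable assms by blast
    fix u :: real assume u: "u \<in> {0..1}"
    show "(if u \<in> {0,1} then 0 else 1) \<le> qf a u"
    proof (cases "u \<in> {0,1}")
      case True then show ?thesis by (auto simp: qf_def)
    next
      case False
      then have u0: "0 < u" "u < 1" using u by auto
      have "1 powr (-a) \<le> u powr (-a)" by (rule powr_mono2') (use u0 assms in auto)
      moreover have "1 powr (a-1) \<le> (1-u) powr (a-1)" by (rule powr_mono2') (use u0 assms in auto)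
      ultimately have "1 * 1 \<le> u powr (-a) * (1-u) powr (a-1)"
        by (intro mult_mono) auto
      then show ?thesis using False by (simp add: qf_def)
    qed
  qed
  then show ?thesis using integral_unique[OF w] unfolding Bc_def by linarith
qed

lemma Bc_has_integral:
  assumes "0 < a" "a < 1" "\<tau> < t"
  shows "((\<lambda>s. (t-s) powr (a-1) * (s-\<tau>) powr (-a)) has_integral Bc a) {\<tau>..t}"
proof -
  define m where "m = 1/(t-\<tau>)"
  define c where "c = -\<tau>/(t-\<tau>)"
  have m: "m > 0" using assms by (simp add: m_def)
  have "(qf a has_integral Bc a) (cbox 0 1)"
    using qf_integrable[OF assms(1,2)] unfolding Bc_def by (simp add: has_integral_integral)
  from has_integral_affinity'[OF this m, of c]
  have "((\<lambda>x. qf a (m *\<^sub>R x + c)) has_integral Bc a /\<^sub>R m ^ DIM(real)) (cbox ((0 - c) /\<^sub>R m) ((1 - c) /\<^sub>R m))" .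
  moreover have "(0 - c) /\<^sub>R m = \<tau>" "(1 - c) /\<^sub>R m = t" "Bc a /\<^sub>R m ^ DIM(real) = (t-\<tau>) * Bc a"
    using assms by (auto simp: m_def c_def field_simps)
  ultimately have I: "((\<lambda>x. qf a (m * x + c)) has_integral (t-\<tau>) * Bc a) {\<tau>..t}" by (simp add: m_def)
  have eq: "qf a (m * s + c) = (t-\<tau>) * ((t-s) powr (a-1) * (s-\<tau>) powr (-a))" if s: "s \<in> {\<tau>..t}" for s
  proof -
    have 1: "m * s + c = (s - \<tau>)/(t-\<tau>)" by (simp add: m_def c_def diff_divide_distrib)
    have 2: "1 - (m * s + c) = (t-s)/(t-\<tau>)" using assms unfolding 1 by (simp add: field_simps)
    have "qf a (m * s + c) = (s-\<tau>) powr (-a) / (t-\<tau>) powr (-a) * ((t-s) powr (a-1) / (t-\<tau>) powr (a-1))"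
      unfolding qf_def 1 2[unfolded 1] using s assms by (simp add: powr_divide)
    also have "\<dots> = (s-\<tau>) powr (-a) * (t-s) powr (a-1) * ((t-\<tau>) powr a * (t-\<tau>) powr (1-a))"
      by (simp add: powr_minus divide_simps powr_diff)
    also have "(t-\<tau>) powr a * (t-\<tau>) powr (1-a) = t - \<tau>"
      using assms by (simp add: powr_add[symmetric])
    finally show ?thesis by simp
  qed
  have "((\<lambda>s. (t-\<tau>) * ((t-s) powr (a-1) * (s-\<tau>) powr (-a))) has_integral (t-\<tau>) * Bc a) {\<tau>..t}"
    using I eq by (rule has_integral_eq[rotated]) simp
  from has_integral_mult_right[OF this, of "1/(t-\<tau>)"] assms
  show ?thesis by simp
qed



lemma sigma_finite_lebesgue_real: "sigma_finite_measure (lebesgue :: real measure)"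
proof
  show "\<exists>A. countable A \<and> A \<subseteq> sets (lebesgue::real measure) \<and> \<Union> A = space lebesgue \<and> (\<forall>a\<in>A. emeasure lebesgue a \<noteq> \<infinity>)"
  proof (intro exI[of _ "range (\<lambda>n::nat. {-real n..real n})"] conjI)
    show "\<Union> (range (\<lambda>n::nat. {-real n..real n})) = space lebesgue"
    proof -
      have "x \<in> \<Union> (range (\<lambda>n::nat. {-real n..real n}))" for x :: real
      proof -
        obtain n :: nat where "\<bar>x\<bar> \<le> real n" using real_arch_simple by blast
        then have "x \<in> {-real n..real n}" by auto
        then show ?thesis by blast
      qed
      then show ?thesis by auto
    qed
  qed auto
qed

interpretation LL: pair_sigma_finite "lebesgue :: real measure" "lebesgue :: real measure"
  by (simp add: pair_sigma_finite_def sigma_finite_lebesgue_real)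

lemma meas_transfer:
  assumes "f \<in> borel_measurable (lborel \<Otimes>\<^sub>M (lborel :: real measure))"
  shows "f \<in> borel_measurable (lebesgue \<Otimes>\<^sub>M (lebesgue :: real measure))"
proof -
  have "(\<lambda>p. p) \<in> (lebesgue \<Otimes>\<^sub>M (lebesgue :: real measure)) \<rightarrow>\<^sub>M (lborel \<Otimes>\<^sub>M lborel)"
    apply (rule measurable_pair)
    using measurable_comp[OF measurable_fst measurable_completion[OF measurable_ident_sets[of lborel lborel]]]
      measurable_comp[OF measurable_snd measurable_completion[OF measurable_ident_sets[of lborel lborel]]]
    by (simp_all add: o_def)
  from measurable_comp[OF this assms] show ?thesis by (simp add: o_def)
qed


definition kf :: "real \<Rightarrow> real \<Rightarrow> real \<Rightarrow> real \<Rightarrow> real" where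
  "kf a t \<tau> s = (if 0 \<le> \<tau> \<and> \<tau> \<le> s \<and> s \<le> t then (t-s) powr (a-1) * (s-\<tau>) powr (-a) else 0)"

lemma kf_nonneg: "kf a t \<tau> s \<ge> 0"
  by (simp add: kf_def)

lemma kf_meas: "(\<lambda>p. kf a t (fst p) (snd p)) \<in> borel_measurable (lebesgue \<Otimes>\<^sub>M lebesgue)"
  by (rule meas_transfer) (unfold kf_def, measurable)

lemma kf_int:
  assumes "0 < a" "a < 1"
  shows "integrable lebesgue (kf a t \<tau>) \<and> (\<integral>s. kf a t \<tau> s \<partial>lebesgue) = (if 0 \<le> \<tau> \<and> \<tau> < t then Bc a else 0)"
proof (cases "0 \<le> \<tau> \<and> \<tau> < t")
  case True
  let ?\<phi> = "\<lambda>s. (t-s) powr (a-1) * (s-\<tau>) powr (-a)"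
  have hi: "(?\<phi> has_integral Bc a) {\<tau>..t}" using Bc_has_integral assms True by blast
  have "?\<phi> absolutely_integrable_on {\<tau>..t}"
    by (rule nonnegative_absolutely_integrable_1) (use hi in auto)
  then have si: "set_integrable lebesgue {\<tau>..t} ?\<phi>" .
  have eq: "kf a t \<tau> = (\<lambda>s. indicator {\<tau>..t} s *\<^sub>R ?\<phi> s)"
    using True by (auto simp: kf_def indicator_def fun_eq_iff)
  have "(LINT s:{\<tau>..t}|lebesgue. ?\<phi> s) = integral {\<tau>..t} ?\<phi>"
    by (rule set_lebesgue_integral_eq_integral(2)[OF si])
  then show ?thesis using si True integral_unique[OF hi]
    by (simp add: eq set_integrable_def set_lebesgue_integral_def)
next
  case False
  have "kf a t \<tau> = (\<lambda>s. 0)"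
  proof
    fix s show "kf a t \<tau> s = 0"
    proof (cases "0 \<le> \<tau> \<and> \<tau> \<le> s \<and> s \<le> t")
      case True
      then have "s = t" using False by auto
      then show ?thesis using True by (simp add: kf_def)
    qed (auto simp: kf_def)
  qed
  then show ?thesis using False by auto
qed

lemma fub:
  fixes g :: "real \<Rightarrow> 'a::euclidean_space"
  assumes a: "0 < a" "a < 1" and g: "g absolutely_integrable_on {0..t}"
  shows "((\<lambda>s. (t-s) powr (a-1) *\<^sub>R integral {0..s} (\<lambda>\<tau>. (s-\<tau>) powr (-a) *\<^sub>R g \<tau>))
            has_integral (Bc a *\<^sub>R integral {0..t} g)) {0..t}"
proof -
  define g0 where "g0 \<tau> = indicator {0..t} \<tau> *\<^sub>R g \<tau>" for \<tau>
  have g0i: "integrable lebesgue g0" using g by (simp add: set_integrable_def g0_def[abs_def])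
  have g0m: "g0 \<in> borel_measurable lebesgue" using g0i by (rule borel_measurable_integrable)
  define F where "F \<tau> s = kf a t \<tau> s *\<^sub>R g0 \<tau>" for \<tau> s
  have Fm: "case_prod F \<in> borel_measurable (lebesgue \<Otimes>\<^sub>M lebesgue)"
  proof -
    have "(\<lambda>p. g0 (fst p)) \<in> borel_measurable (lebesgue \<Otimes>\<^sub>M lebesgue)"
      using measurable_comp[OF measurable_fst g0m] by (simp add: o_def)
    from borel_measurable_scaleR[OF kf_meas this]
    show ?thesis by (simp add: F_def split_beta')
  qed
  have nF: "(\<integral>s. norm (F \<tau> s) \<partial>lebesgue) = (if 0 \<le> \<tau> \<and> \<tau> < t then Bc a else 0) * norm (g0 \<tau>)" for \<tau>
  proof -
    have "(\<lambda>s. norm (F \<tau> s)) = (\<lambda>s. kf a t \<tau> s * norm (g0 \<tau>))"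
      using kf_nonneg by (simp add: F_def fun_eq_iff)
    then show ?thesis using kf_int[OF a, of t \<tau>] by simp
  qed
  have Fi: "integrable (lebesgue \<Otimes>\<^sub>M lebesgue) (case_prod F)"
  proof (rule LL.Fubini_integrable[OF Fm])
    have "integrable lebesgue (\<lambda>\<tau>. Bc a * norm (g0 \<tau>) * indicator {0..<t} \<tau>)"
      using g0i by (intro integrable_real_mult_indicator integrable_mult_right integrable_norm) auto
    moreover have "(\<lambda>\<tau>. Bc a * norm (g0 \<tau>) * indicator {0..<t} \<tau>) = (\<lambda>\<tau>. \<integral>s. norm (case_prod F (\<tau>, s)) \<partial>lebesgue)"
      by (auto simp: nF indicator_def fun_eq_iff)
    ultimately show "integrable lebesgue (\<lambda>\<tau>. \<integral>s. norm (case_prod F (\<tau>, s)) \<partial>lebesgue)" by simp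
    show "AE \<tau> in lebesgue. integrable lebesgue (\<lambda>s. case_prod F (\<tau>, s))"
      using kf_int[OF a] by (auto simp: F_def intro!: integrable_scaleR_left)
  qed
  define H where "H s = (\<integral>\<tau>. F \<tau> s \<partial>lebesgue)" for s
  have fubeq: "(\<integral>s. H s \<partial>lebesgue) = (\<integral>\<tau>. (\<integral>s. F \<tau> s \<partial>lebesgue) \<partial>lebesgue)"
    unfolding H_def by (rule LL.Fubini_integral[OF Fi])
  have rhs: "(\<integral>\<tau>. (\<integral>s. F \<tau> s \<partial>lebesgue) \<partial>lebesgue) = Bc a *\<^sub>R integral {0..t} g"
  proof -
    have "(\<integral>\<tau>. (\<integral>s. F \<tau> s \<partial>lebesgue) \<partial>lebesgue) = (\<integral>\<tau>. Bc a *\<^sub>R g0 \<tau> \<partial>lebesgue)"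
    proof (rule integral_cong_AE)
      show "(\<lambda>\<tau>. \<integral>s. F \<tau> s \<partial>lebesgue) \<in> borel_measurable lebesgue"
        using LL.integrable_fst[OF Fi] by (rule borel_measurable_integrable)
      show "(\<lambda>\<tau>. Bc a *\<^sub>R g0 \<tau>) \<in> borel_measurable lebesgue" using g0m by measurable
      have "{t} \<in> null_sets lebesgue" using negligible_iff_null_sets negligible_sing by blast
      then show "AE \<tau> in lebesgue. (\<integral>s. F \<tau> s \<partial>lebesgue) = Bc a *\<^sub>R g0 \<tau>"
      proof (rule AE_I')
        show "{\<tau> \<in> space lebesgue. (\<integral>s. F \<tau> s \<partial>lebesgue) \<noteq> Bc a *\<^sub>R g0 \<tau>} \<subseteq> {t}"
          using kf_int[OF a] by (auto simp: F_def g0_def indicator_def split: if_splits)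
      qed
    qed
    also have "\<dots> = Bc a *\<^sub>R (\<integral>\<tau>. g0 \<tau> \<partial>lebesgue)" by simp
    also have "(\<integral>\<tau>. g0 \<tau> \<partial>lebesgue) = integral {0..t} g"
      using set_lebesgue_integral_eq_integral(2)[OF g]
      by (simp add: set_lebesgue_integral_def g0_def[abs_def])
    finally show ?thesis .
  qed
  define h where "h s = integral {0..s} (\<lambda>\<tau>. (s-\<tau>) powr (-a) *\<^sub>R g \<tau>)" for s
  define G where "G s = indicator {0..t} s *\<^sub>R ((t-s) powr (a-1) *\<^sub>R h s)" for s
  have AEG: "AE s in lebesgue. H s = G s"
    using LL.AE_integrable_snd[OF Fi]
  proof eventually_elim
    case (elim s)
    show ?case
    proof (cases "0 \<le> s \<and> s < t")
      case False
      then have "\<forall>\<tau>. F \<tau> s = 0"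
        by (auto simp: F_def kf_def)
      then show ?thesis using False by (auto simp: H_def G_def indicator_def)
    next
      case True
      define c where "c = (t-s) powr (a-1)"
      have c: "c > 0" using True by (simp add: c_def)
      have Feq: "F \<tau> s = c *\<^sub>R (indicator {0..s} \<tau> *\<^sub>R ((s-\<tau>) powr (-a) *\<^sub>R g \<tau>))" for \<tau>
        using True by (auto simp: F_def kf_def g0_def c_def indicator_def)
      have "integrable lebesgue (\<lambda>\<tau>. (1/c) *\<^sub>R F \<tau> s)"
        using elim by (rule integrable_scaleR_right)
      then have si: "set_integrable lebesgue {0..s} (\<lambda>\<tau>. (s-\<tau>) powr (-a) *\<^sub>R g \<tau>)"
        using c by (simp add: Feq set_integrable_def)
      have "H s = c *\<^sub>R (\<integral>\<tau>. indicator {0..s} \<tau> *\<^sub>R ((s-\<tau>) powr (-a) *\<^sub>R g \<tau>) \<partial>lebesgue)"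
        unfolding H_def Feq by (rule integral_scaleR_right)
      also have "\<dots> = c *\<^sub>R h s"
        using set_lebesgue_integral_eq_integral(2)[OF si] by (simp add: h_def set_lebesgue_integral_def)
      finally show ?thesis using True by (simp add: G_def c_def)
    qed
  qed
  have Hi: "integrable lebesgue H" unfolding H_def by (rule LL.integrable_snd[OF Fi])
  from AEG obtain N where N0: "{s \<in> space lebesgue. \<not> H s = G s} \<subseteq> N" "emeasure lebesgue N = 0" "N \<in> sets lebesgue"
    by (rule AE_E)
  then have N: "{s \<in> space lebesgue. \<not> H s = G s} \<subseteq> N" "N \<in> null_sets lebesgue" by auto
  have "(G has_integral (\<integral>s. H s \<partial>lebesgue)) UNIV"
  proof (rule has_integral_spike[OF _ _ has_integral_integral_lebesgue[OF Hi]])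
    show "negligible N" using N(2) negligible_iff_null_sets by blast
    show "\<And>x. x \<in> UNIV - N \<Longrightarrow> G x = H x" using N(1) by force
  qed
  then have "((\<lambda>s. if s \<in> {0..t} then (t-s) powr (a-1) *\<^sub>R h s else 0) has_integral (Bc a *\<^sub>R integral {0..t} g)) UNIV"
  proof -
    have "G = (\<lambda>s. if s \<in> {0..t} then (t-s) powr (a-1) *\<^sub>R h s else 0)"
      by (auto simp: G_def fun_eq_iff indicator_def)
    with \<open>(G has_integral _) UNIV\<close> fubeq rhs show ?thesis by simp
  qed
  then show ?thesis unfolding has_integral_restrict_UNIV h_def .
qed


lemma powr_rev_has_integral:
  assumes "b > -1" "p \<le> t"
  shows "((\<lambda>s::real. (t-s) powr b) has_integral ((t-p) powr (b+1)/(b+1))) {p..t}"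
proof -
  have "((\<lambda>x::real. x powr b) has_integral ((t-p) powr (b+1)/(b+1))) (cbox 0 (t-p))"
    using has_integral_powr_from_0[OF assms(1), of "t-p"] assms by simp
  from has_integral_affinity[OF this, of "-1" t]
  have "((\<lambda>x. ((-1) *\<^sub>R x + t) powr b) has_integral ((t-p) powr (b+1)/(b+1)))
      ((\<lambda>x. (1 / -1) *\<^sub>R x + - ((1 / -1) *\<^sub>R t)) ` cbox (0::real) (t-p))"
    by simp
  moreover have "(\<lambda>x::real. (1 / -1) *\<^sub>R x + - ((1 / -1) *\<^sub>R t)) ` cbox (0::real) (t-p) = {p..t}"
    by (auto simp: image_iff intro!: bexI[where x="t - _"])
  ultimately show ?thesis by simp
qed

lemma abs_cont_integrable:
  assumes "abs_cont_on T x"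
  shows "dx T x absolutely_integrable_on {0..T}"
  using assms unfolding abs_cont_on_def by (elim conjE)

lemma abs_cont_eq:
  assumes "abs_cont_on T x" "t \<in> {0..T}"
  shows "x t = x 0 + integral {0..t} (dx T x)"
proof -
  have "\<forall>t\<in>{0..T}. x t = x 0 + integral {0..t} (dx T x)"
    using assms(1) unfolding abs_cont_on_def by (elim conjE)
  from bspec[OF this assms(2)] show ?thesis .
qed

lemma abs_cont_cont:
  fixes x :: "real \<Rightarrow> 'a::euclidean_space"
  assumes "abs_cont_on T x"
  shows "continuous_on {0..T} x"
proof -
  have gi: "dx T x integrable_on {0..T}"
    using abs_cont_integrable[OF assms] set_lebesgue_integral_eq_integral(1) by blast
  have "continuous_on {0..T} (\<lambda>t. x 0 + integral {0..t} (dx T x))"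
    by (intro continuous_intros indefinite_integral_continuous_1 gi)
  then show ?thesis
    by (rule continuous_on_eq) (rule abs_cont_eq[OF assms, symmetric])
qed

lemma repr:
  fixes x :: "real \<Rightarrow> 'a::euclidean_space" and f :: "real \<Rightarrow> 'a \<Rightarrow> 'a"
  assumes a: "0 < \<alpha>" "\<alpha> < 1" and ac: "abs_cont_on T x"
    and L: "AE s in lebesgue. s \<in> {0<..T} \<longrightarrow> Lfrac T \<alpha> x s = f s (x s)"
    and t: "t \<in> {0..T}"
  shows "((\<lambda>s. (t-s) powr (\<alpha>-1) *\<^sub>R ((Gamma (1-\<alpha>) / Gamma (2-\<alpha>) * s powr (1-\<alpha>)) *\<^sub>R f s (x s)))
           has_integral (Bc \<alpha> *\<^sub>R (x t - x 0))) {0..t}"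
proof -
  define g where "g = dx T x"
  have gT: "g absolutely_integrable_on {0..T}" using abs_cont_integrable[OF ac] by (simp add: g_def)
  have gt: "g absolutely_integrable_on {0..t}"
    by (rule set_integrable_subset[OF gT]) (use t in auto)
  have "x t = x 0 + integral {0..t} g" using abs_cont_eq[OF ac t] by (simp only: g_def)
  then have xt: "integral {0..t} g = x t - x 0" by simp
  define h where "h s = integral {0..s} (\<lambda>\<tau>. (s-\<tau>) powr (-\<alpha>) *\<^sub>R g \<tau>)" for s
  have F: "((\<lambda>s. (t-s) powr (\<alpha>-1) *\<^sub>R h s) has_integral (Bc \<alpha> *\<^sub>R (x t - x 0))) {0..t}"
    using fub[OF a gt] xt by (simp add: h_def)
  from L obtain N where N0: "{s \<in> space lebesgue. \<not> (s \<in> {0<..T} \<longrightarrow> Lfrac T \<alpha> x s = f s (x s))} \<subseteq> N"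
      "emeasure lebesgue N = 0" "N \<in> sets lebesgue"
    by (rule AE_E)
  have "N \<in> null_sets lebesgue" using N0(2,3) by (rule null_setsI)
  then have "negligible N" using negligible_iff_null_sets by blast
  then have nN: "negligible (insert 0 N)" by simp
  show ?thesis
  proof (rule has_integral_spike[OF nN _ F])
    fix s assume s: "s \<in> {0..t} - insert 0 N"
    then have s0: "s > 0" "s \<le> T" using t by auto
    have "Lfrac T \<alpha> x s = f s (x s)" using s s0 N0(1) by auto
    then have eq: "(Gamma (2-\<alpha>) / s powr (1-\<alpha>)) *\<^sub>R ((1 / Gamma (1-\<alpha>)) *\<^sub>R h s) = f s (x s)"
      by (simp add: Lfrac_def caputo_def h_def g_def)
    have G1: "Gamma (1-\<alpha>) > 0" "Gamma (2-\<alpha>) > 0" using a by auto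
    have sp: "s powr (1-\<alpha>) > 0" using s0 by simp
    have c1: "Gamma (1-\<alpha>) / Gamma (2-\<alpha>) * s powr (1-\<alpha>) * (Gamma (2-\<alpha>) / s powr (1-\<alpha>) * (1 / Gamma (1-\<alpha>))) = 1"
      using G1 sp by (simp add: field_simps)
    have "h s = (Gamma (1-\<alpha>) / Gamma (2-\<alpha>) * s powr (1-\<alpha>)) *\<^sub>R f s (x s)"
      unfolding eq[symmetric] scaleR_scaleR c1 by simp
    then show "(t-s) powr (\<alpha>-1) *\<^sub>R ((Gamma (1-\<alpha>) / Gamma (2-\<alpha>) * s powr (1-\<alpha>)) *\<^sub>R f s (x s))
        = (t-s) powr (\<alpha>-1) *\<^sub>R h s" by simp
  qed
qed


theorem mainTheorem15:
  fixes \<alpha> T :: real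
    and f :: "real \<Rightarrow> complex ^ 'd \<Rightarrow> complex ^ 'd"
    and x1 x2 :: "real \<Rightarrow> complex ^ 'd"
    and x0 :: "complex ^ 'd"
  assumes "0 < \<alpha>" "\<alpha> < 1" "0 < T"
    and "continuous_on ({0..T} \<times> UNIV) (\<lambda>(t, x). f t x)"
    and "\<forall>R>0. \<exists>M>0. \<forall>t\<in>{0..T}. \<forall>x y. \<bar>t\<bar> \<le> R \<and> norm x \<le> R \<and> norm y \<le> R
            \<longrightarrow> norm (f t x - f t y) \<le> M * norm (x - y)"
    and "abs_cont_on T x1" "abs_cont_on T x2"
    and "x1 0 = x0" "x2 0 = x0"
    and "AE t in lebesgue. t \<in> {0<..T} \<longrightarrow> Lfrac T \<alpha> x1 t = f t (x1 t)"
    and "AE t in lebesgue. t \<in> {0<..T} \<longrightarrow> Lfrac T \<alpha> x2 t = f t (x2 t)"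
  shows "\<forall>t\<in>{0..T}. x1 t = x2 t"
proof -
  note a = assms(1,2)
  have T: "0 < T" by fact
  define K where "K = Gamma (1-\<alpha>) / Gamma (2-\<alpha>)"
  have K: "K > 0" unfolding K_def using a by (intro divide_pos_pos Gamma_real_pos) auto
  have Bc: "Bc \<alpha> > 0" using Bc_pos a by blast
  have c1: "continuous_on {0..T} x1" by (rule abs_cont_cont[OF assms(6)])
  have c2: "continuous_on {0..T} x2" by (rule abs_cont_cont[OF assms(7)])
  define e where "e s = x1 s - x2 s" for s
  have ce: "continuous_on {0..T} e" unfolding e_def by (intro continuous_on_diff c1 c2)
  have "bounded (x1 ` {0..T})" by (intro compact_imp_bounded compact_continuous_image c1) auto
  then obtain B1 where B1': "\<forall>y\<in>x1 ` {0..T}. norm y \<le> B1" unfolding bounded_iff by blast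
  have B1: "\<And>s. s \<in> {0..T} \<Longrightarrow> norm (x1 s) \<le> B1" using B1' by blast
  have "bounded (x2 ` {0..T})" by (intro compact_imp_bounded compact_continuous_image c2) auto
  then obtain B2 where B2': "\<forall>y\<in>x2 ` {0..T}. norm y \<le> B2" unfolding bounded_iff by blast
  have B2: "\<And>s. s \<in> {0..T} \<Longrightarrow> norm (x2 s) \<le> B2" using B2' by blast
  define R where "R = max T (max B1 B2) + 1"
  have R: "R > 0" using T by (simp add: R_def)
  obtain L where L: "L > 0" "\<forall>t\<in>{0..T}. \<forall>x y. \<bar>t\<bar> \<le> R \<and> norm x \<le> R \<and> norm y \<le> R
            \<longrightarrow> norm (f t x - f t y) \<le> L * norm (x - y)"
    using assms(5) R by blast
  have lip: "norm (f s (x1 s) - f s (x2 s)) \<le> L * norm (e s)" if s: "s \<in> {0..T}" for s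
  proof -
    have "\<bar>s\<bar> \<le> R" "norm (x1 s) \<le> R" "norm (x2 s) \<le> R"
      using s B1[OF s] B2[OF s] by (auto simp: R_def)
    then show ?thesis using L(2) s by (auto simp: e_def)
  qed
  define cL where "cL = K * T powr (1-\<alpha>) * L"
  have cL: "cL > 0" using K T L by (simp add: cL_def)
  define \<delta> where "\<delta> = (Bc \<alpha> * \<alpha> / (2*cL)) powr (1/\<alpha>)"
  have \<delta>: "\<delta> > 0" using Bc a cL by (simp add: \<delta>_def)
  have \<delta>a: "\<delta> powr \<alpha> = Bc \<alpha> * \<alpha> / (2*cL)"
    using Bc a cL by (simp add: \<delta>_def powr_powr)
  have rep: "((\<lambda>s. (t-s) powr (\<alpha>-1) *\<^sub>R ((K * s powr (1-\<alpha>)) *\<^sub>R (f s (x1 s) - f s (x2 s))))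
      has_integral (Bc \<alpha> *\<^sub>R e t)) {0..t}" if t: "t \<in> {0..T}" for t
  proof -
    have "((\<lambda>s. (t-s) powr (\<alpha>-1) *\<^sub>R ((K * s powr (1-\<alpha>)) *\<^sub>R f s (x1 s))
           - (t-s) powr (\<alpha>-1) *\<^sub>R ((K * s powr (1-\<alpha>)) *\<^sub>R f s (x2 s)))
      has_integral (Bc \<alpha> *\<^sub>R (x1 t - x1 0) - Bc \<alpha> *\<^sub>R (x2 t - x2 0))) {0..t}"
      using repr[where f=f and x=x1, OF a assms(6) assms(10) t] repr[where f=f and x=x2, OF a assms(7) assms(11) t]
      unfolding K_def by (rule has_integral_diff)
    moreover have "Bc \<alpha> *\<^sub>R (x1 t - x1 0) - Bc \<alpha> *\<^sub>R (x2 t - x2 0) = Bc \<alpha> *\<^sub>R e t"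
      using assms(8,9) by (simp add: e_def algebra_simps)
    ultimately show ?thesis by (simp add: algebra_simps)
  qed
  have step: "\<forall>s\<in>{0..T}. s \<le> real n * \<delta> \<longrightarrow> e s = 0" for n
  proof (induction n)
    case 0
    then show ?case using assms(8,9) by (auto simp: e_def)
  next
    case (Suc n)
    define b where "b = min T (real (Suc n) * \<delta>)"
    have b: "0 \<le> b" "b \<le> T" using T \<delta> by (auto simp: b_def)
    have "continuous_on {0..b} (\<lambda>s. norm (e s))"
      by (intro continuous_on_norm continuous_on_subset[OF ce]) (use b in auto)
    then obtain tm where tm: "tm \<in> {0..b}" "\<And>y. y \<in> {0..b} \<Longrightarrow> norm (e y) \<le> norm (e tm)"
      using continuous_attains_sup[of "{0..b}" "\<lambda>s. norm (e s)"] b by auto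
    have "norm (e tm) = 0"
    proof (cases "tm \<le> real n * \<delta>")
      case True
      then show ?thesis using Suc.IH tm(1) b by auto
    next
      case False
      define t where "t = tm"
      define m where "m = norm (e t)"
      define nd where "nd = real n * \<delta>"
      have tT: "t \<in> {0..T}" using tm(1) b by (auto simp: t_def)
      have nd: "0 \<le> nd" "nd < t" "t - nd \<le> \<delta>"
        using False \<delta> tm(1) by (auto simp: t_def nd_def b_def algebra_simps)
      have m0: "m \<ge> 0" by (simp add: m_def)
      define \<psi> where "\<psi> s = (if s \<in> {nd..t} then cL * m * (t-s) powr (\<alpha>-1) else 0)" for s
      have "((\<lambda>s. cL * m * (t-s) powr (\<alpha>-1)) has_integral (cL * m * ((t-nd) powr \<alpha> / \<alpha>))) {nd..t}"
        using has_integral_mult_right[OF powr_rev_has_integral[of "\<alpha>-1" nd t], of "cL * m"] a nd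
        by simp
      then have \<psi>i: "(\<psi> has_integral (cL * m * ((t-nd) powr \<alpha> / \<alpha>))) {0..t}"
        unfolding \<psi>_def using nd by (subst has_integral_restrict) auto
      let ?I = "\<lambda>s. (t-s) powr (\<alpha>-1) *\<^sub>R ((K * s powr (1-\<alpha>)) *\<^sub>R (f s (x1 s) - f s (x2 s)))"
      have bound: "norm (?I s) \<le> \<psi> s" if s: "s \<in> {0..t}" for s
      proof (cases "s \<in> {nd..t}")
        case False
        then have "s \<le> nd" using s by auto
        then have "e s = 0" using Suc.IH s tT by (auto simp: nd_def)
        then have "x1 s = x2 s" by (simp add: e_def)
        then show ?thesis using False by (auto simp: \<psi>_def)
      next
        case True
        have sT: "s \<in> {0..T}" using s tT by auto
        have p1: "(t-s) powr (\<alpha>-1) \<ge> 0" by simp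
        have p2: "s powr (1-\<alpha>) \<le> T powr (1-\<alpha>)" by (rule powr_mono2) (use a sT in auto)
        have es: "norm (e s) \<le> m"
          unfolding m_def t_def by (rule tm(2)) (use s tm(1) in \<open>auto simp: t_def\<close>)
        have "norm (?I s) = (t-s) powr (\<alpha>-1) * (K * s powr (1-\<alpha>)) * norm (f s (x1 s) - f s (x2 s))"
          using K by simp
        also have "\<dots> \<le> (t-s) powr (\<alpha>-1) * (K * T powr (1-\<alpha>)) * (L * m)"
        proof (intro mult_mono mult_left_mono p2 p1)
          show "norm (f s (x1 s) - f s (x2 s)) \<le> L * m"
            using lip[OF sT] es L(1) by (meson mult_left_mono less_imp_le order_trans)
        qed (use K L m0 in auto)
        also have "\<dots> = \<psi> s" using True by (simp add: \<psi>_def cL_def)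
        finally show ?thesis .
      qed
      have iu: "integral {0..t} ?I = Bc \<alpha> *\<^sub>R e t" by (rule integral_unique[OF rep[OF tT]])
      have "norm (integral {0..t} ?I) \<le> integral {0..t} \<psi>"
        by (rule integral_norm_bound_integral[OF has_integral_integrable[OF rep[OF tT]] has_integral_integrable[OF \<psi>i] bound])
      then have "norm (Bc \<alpha> *\<^sub>R e t) \<le> integral {0..t} \<psi>" by (simp only: iu)
      also have "\<dots> = cL * m * ((t-nd) powr \<alpha> / \<alpha>)" by (rule integral_unique[OF \<psi>i])
      also have "\<dots> \<le> cL * m * (\<delta> powr \<alpha> / \<alpha>)"
        using nd cL m0 a by (intro mult_left_mono divide_right_mono powr_mono2) auto
      also have "\<dots> = Bc \<alpha> * m / 2" using cL a by (simp add: \<delta>a field_simps)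
      finally have "Bc \<alpha> * m \<le> Bc \<alpha> * m / 2" using Bc by (simp add: m_def)
      then have "Bc \<alpha> * m \<le> 0" by linarith
      then have "m \<le> 0" using Bc by (simp add: mult_le_0_iff)
      then have "m = 0" using m0 by linarith
      then show ?thesis by (simp add: m_def t_def)
    qed
    show ?case
    proof (intro ballI impI)
      fix s assume s: "s \<in> {0..T}" "s \<le> real (Suc n) * \<delta>"
      then have "s \<in> {0..b}" by (auto simp: b_def)
      then have "norm (e s) \<le> 0" using tm(2) \<open>norm (e tm) = 0\<close> by fastforce
      then show "e s = 0" by simp
    qed
  qed
  show ?thesis
  proof
    fix t assume t: "t \<in> {0..T}"
    obtain n :: nat where "t / \<delta> \<le> real n" using real_arch_simple by blast
    then have "t \<le> real n * \<delta>" using \<delta> by (simp add: divide_le_eq mult.commute)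
    then have "e t = 0" using step t by blast
    then show "x1 t = x2 t" by (simp add: e_def)
  qed
qed

end
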